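(* Fix any strategies $g^{-i}=(g^j)_{j\ne i}$ of the players other than $i$, and any strategy $g^i$ of player $i$. Then there exists a strategy $s^i$ of player $i$ of the form $A^i_t\sim s^i_t(\cdot\mid a_{1:t-1},x^i_t)$ (depending on the private information only through the current type) such that $$P^{s^ig^{-i}}(X_t=x_t,A_t=a_t)=P^{g^ig^{-i}}(X_t=x_t,A_t=a_t)\quad\forall t\in\mathcal T,\ x_t\in\mathcal X,\ a_t\in\mathcal A,$$ and consequently $J^{i,s^ig^{-i}}=J^{i,g^ig^{-i}}$ (indeed $J^{j,s^ig^{-i}}=J^{j,g^ig^{-i}}$ for every player $j$).
   Context: Model: players $\mathcal N=\{1,\dots,N\}$, horizon $\mathcal T=\{1,\dots,T\}$. Player $i$ has a finite type set $\mathcal X^i$ and a finite action set $\mathcal A^i$; $\mathcal X=\times_i\mathcal X^i$, $\mathcal A=\times_i\mathcal A^i$. Types evolve as $P(x_1)=\prod_iQ^i_1(x^i_1)$ and $P(x_{t+1}\mid x_{1:t},a_{1:t})=\prod_iQ^i_{t+1}(x^i_{t+1}\mid x^i_t,a_t)$ for known kernels (each may depend on the full action profile $a_t$). Player $i$ privately observes its own types and all actions are public, so at time $t$ player $i$ knows $(a_{1:t-1},x^i_{1:t})$. A (general) strategy $g^i$ specifies $g^i_t(\cdot\mid a_{1:t-1},x^i_{1:t})\in\mathcal P(\mathcal A^i)$; given their information, players randomize independently. Player $i$ receives reward $R^i(x_t,a_t)$ at each time and $J^{i,g}=\mathbb E^g[\sum_{t=1}^TR^i(X_t,A_t)]$.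 $P^g$, $\mathbb E^g$ denote probability and expectation under profile $g$; $-i$ denotes all players except $i$. *)

theory Defs
  imports "HOL-Probability.Probability"
begin

text \<open>
  Players form a finite type 'p. A type profile is a function 'p => 'x, an action
  profile a function 'p => 'a. Times are 1-based: at time t (1 <= t <= T) the
  history consists of lists of length t.

  A (general) strategy of one player: g t as xs, where as = a_{1:t-1}
  (list of action profiles of length t-1) and xs = x^i_{1:t} (list of the
  player's own types, length t), is a distribution over own actions.
  Q1 i is the distribution of x^i_1; Q i (t+1) (x^i_t) (a_t) that of x^i_{t+1}.
\<close>

type_synonym ('p, 'x, 'a) strategy = "nat \<Rightarrow> ('p \<Rightarrow> 'a) list \<Rightarrow> 'x list \<Rightarrow> 'a pmf"

definition valid_strategy :: "'a set \<Rightarrow> ('p, 'x, 'a) strategy \<Rightarrow> bool" where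
  "valid_strategy Ai gi \<longleftrightarrow> (\<forall>t as xs. set_pmf (gi t as xs) \<subseteq> Ai)"

fun hist :: "('p::finite \<Rightarrow> 'x pmf) \<Rightarrow> ('p \<Rightarrow> nat \<Rightarrow> 'x \<Rightarrow> ('p \<Rightarrow> 'a) \<Rightarrow> 'x pmf)
     \<Rightarrow> ('p \<Rightarrow> ('p, 'x, 'a) strategy) \<Rightarrow> nat \<Rightarrow> (('p \<Rightarrow> 'x) list \<times> ('p \<Rightarrow> 'a) list) pmf" where
  "hist Q1 Q g 0 = return_pmf ([], [])"
| "hist Q1 Q g (Suc t) =
     bind_pmf (hist Q1 Q g t) (\<lambda>(xs, as).
       bind_pmf (if t = 0 then Pi_pmf UNIV undefined Q1
                 else Pi_pmf UNIV undefined (\<lambda>i. Q i (Suc t) (last xs i) (last as))) (\<lambda>x.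
       bind_pmf (Pi_pmf UNIV undefined (\<lambda>i. g i (Suc t) as (map (\<lambda>y. y i) (xs @ [x])))) (\<lambda>a.
       return_pmf (xs @ [x], as @ [a]))))"

definition marginal :: "('p::finite \<Rightarrow> 'x pmf) \<Rightarrow> ('p \<Rightarrow> nat \<Rightarrow> 'x \<Rightarrow> ('p \<Rightarrow> 'a) \<Rightarrow> 'x pmf)
     \<Rightarrow> ('p \<Rightarrow> ('p, 'x, 'a) strategy) \<Rightarrow> nat \<Rightarrow> (('p \<Rightarrow> 'x) \<times> ('p \<Rightarrow> 'a)) pmf" where
  "marginal Q1 Q g t = map_pmf (\<lambda>(xs, as). (last xs, last as)) (hist Q1 Q g t)"

definition J :: "('p::finite \<Rightarrow> 'x pmf) \<Rightarrow> ('p \<Rightarrow> nat \<Rightarrow> 'x \<Rightarrow> ('p \<Rightarrow> 'a) \<Rightarrow> 'x pmf)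
     \<Rightarrow> ('p \<Rightarrow> ('p, 'x, 'a) strategy) \<Rightarrow> nat \<Rightarrow> (('p \<Rightarrow> 'x) \<Rightarrow> ('p \<Rightarrow> 'a) \<Rightarrow> real) \<Rightarrow> real" where
  "J Q1 Q g T Rj = measure_pmf.expectation (hist Q1 Q g T)
      (\<lambda>(xs, as). \<Sum>t<T. Rj (xs ! t) (as ! t))"

end

theory Submission
  imports Defs
begin



lemma pmf_bind_inj:
  assumes inj: "\<And>h z h' z'. \<phi> h z = \<phi> h' z' \<Longrightarrow> h = h' \<and> z = z'"
  shows "pmf (bind_pmf M (\<lambda>h. map_pmf (\<phi> h) (N h))) (\<phi> h0 z0) = pmf M h0 * pmf (N h0) z0"
proof -
  have "\<And>h. pmf (map_pmf (\<phi> h) (N h)) (\<phi> h0 z0) = (if h = h0 then pmf (N h0) z0 else 0)"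
  proof -
    fix h show "pmf (map_pmf (\<phi> h) (N h)) (\<phi> h0 z0) = (if h = h0 then pmf (N h0) z0 else 0)"
    proof (cases "h = h0")
      case True
      have "inj (\<phi> h0)" using inj by (auto simp: inj_def)
      then show ?thesis using True by (simp add: pmf_map_inj')
    next
      case False
      then have "\<phi> h0 z0 \<notin> \<phi> h ` set_pmf (N h)" using inj by blast
      then show ?thesis using False by (simp add: pmf_map_outside)
    qed
  qed
  then have "pmf (bind_pmf M (\<lambda>h. map_pmf (\<phi> h) (N h))) (\<phi> h0 z0)
      = (\<integral>h. (if h = h0 then pmf (N h0) z0 else 0) \<partial>measure_pmf M)"
    by (simp add: pmf_bind)
  also have "\<dots> = (\<Sum>a\<in>{h0}. (if a = h0 then pmf (N h0) z0 else 0) * pmf M a)"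
    by (rule integral_measure_pmf_real) (auto split: if_splits)
  finally show ?thesis by simp
qed

lemma hist_Suc_alt:
  "hist Q1 Q g (Suc t) = bind_pmf (hist Q1 Q g t) (\<lambda>p. map_pmf (\<lambda>(x,a). (fst p @ [x], snd p @ [a]))
     (bind_pmf (if t = 0 then Pi_pmf UNIV undefined Q1
                 else Pi_pmf UNIV undefined (\<lambda>i. Q i (Suc t) (last (fst p) i) (last (snd p)))) (\<lambda>x.
      map_pmf (Pair x) (Pi_pmf UNIV undefined (\<lambda>i. g i (Suc t) (snd p) (map (\<lambda>y. y i) (fst p @ [x])))))))"
  by (auto simp: map_pmf_def bind_assoc_pmf bind_return_pmf split_beta intro!: bind_pmf_cong)

lemma hist_pmf_snoc:
  fixes Q1 :: "'p::finite \<Rightarrow> 'x pmf"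
  shows "pmf (hist Q1 Q g (Suc t)) (xs @ [x], as @ [a]) = pmf (hist Q1 Q g t) (xs, as) *
     (\<Prod>j\<in>UNIV. pmf (if t = 0 then Q1 j else Q j (Suc t) (last xs j) (last as)) (x j)) *
     (\<Prod>j\<in>UNIV. pmf (g j (Suc t) as (map (\<lambda>y. y j) (xs @ [x]))) (a j))"
proof -
  have e: "(xs @ [x], as @ [a]) = (\<lambda>p (x,a). (fst p @ [x], snd p @ [a])) (xs, as) (x, a)" by simp
  have 1: "pmf (hist Q1 Q g (Suc t)) (xs @ [x], as @ [a]) = pmf (hist Q1 Q g t) (xs, as) *
     pmf (bind_pmf (if t = 0 then Pi_pmf UNIV undefined Q1
                 else Pi_pmf UNIV undefined (\<lambda>i. Q i (Suc t) (last xs i) (last as))) (\<lambda>x.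
      map_pmf (Pair x) (Pi_pmf UNIV undefined (\<lambda>i. g i (Suc t) as (map (\<lambda>y. y i) (xs @ [x])))))) (x, a)"
    unfolding hist_Suc_alt e by (subst pmf_bind_inj) auto
  have 2: "pmf (bind_pmf P (\<lambda>x. map_pmf (Pair x) (K x))) (x, a) = pmf P x * pmf (K x) a" for P K
    using pmf_bind_inj[of "Pair" P K x a] by simp
  show ?thesis unfolding 1 2 by (simp add: pmf_Pi)
qed




definition tf :: "('p \<Rightarrow> 'x pmf) \<Rightarrow> ('p \<Rightarrow> nat \<Rightarrow> 'x \<Rightarrow> ('p \<Rightarrow> 'a) \<Rightarrow> 'x pmf) \<Rightarrow> 'p \<Rightarrow> nat
   \<Rightarrow> 'x list \<Rightarrow> ('p \<Rightarrow> 'a) list \<Rightarrow> real" where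
  "tf Q1 Q j k ys as = pmf (if k = 0 then Q1 j else Q j (Suc k) (ys!(k-1)) (as!(k-1))) (ys!k)"

definition W :: "('p \<Rightarrow> 'x pmf) \<Rightarrow> ('p \<Rightarrow> nat \<Rightarrow> 'x \<Rightarrow> ('p \<Rightarrow> 'a) \<Rightarrow> 'x pmf) \<Rightarrow> 'p
   \<Rightarrow> ('p, 'x, 'a) strategy \<Rightarrow> 'x list \<Rightarrow> ('p \<Rightarrow> 'a) list \<Rightarrow> real" where
  "W Q1 Q j h ys as = (\<Prod>k<length ys. tf Q1 Q j k ys as * pmf (h (Suc k) (take k as) (take (Suc k) ys)) ((as!k) j))"

lemma W_Nil[simp]: "W Q1 Q j h [] as = 1" by (simp add: W_def)

lemma W_snoc:
  assumes "length ys = length as"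
  shows "W Q1 Q j h (ys @ [y]) (as @ [a]) = W Q1 Q j h ys as *
     pmf (if length ys = 0 then Q1 j else Q j (Suc (length ys)) (last ys) (last as)) y *
     pmf (h (Suc (length ys)) as (ys @ [y])) (a j)"
proof -
  have "W Q1 Q j h (ys @ [y]) (as @ [a]) = (\<Prod>k<length ys. tf Q1 Q j k (ys@[y]) (as@[a]) *
      pmf (h (Suc k) (take k (as@[a])) (take (Suc k) (ys@[y]))) (((as@[a])!k) j)) *
      (tf Q1 Q j (length ys) (ys@[y]) (as@[a]) * pmf (h (Suc (length ys)) (take (length ys) (as@[a])) (take (Suc (length ys)) (ys@[y]))) (((as@[a])!(length ys)) j))"
    by (simp add: W_def)
  also have "(\<Prod>k<length ys. tf Q1 Q j k (ys@[y]) (as@[a]) *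
      pmf (h (Suc k) (take k (as@[a])) (take (Suc k) (ys@[y]))) (((as@[a])!k) j)) = W Q1 Q j h ys as"
    unfolding W_def using assms by (intro prod.cong) (auto simp: tf_def nth_append)
  also have "tf Q1 Q j (length ys) (ys@[y]) (as@[a]) = 
     pmf (if length ys = 0 then Q1 j else Q j (Suc (length ys)) (last ys) (last as)) y"
    using assms by (cases "ys = []") (auto simp: tf_def nth_append last_conv_nth)
  finally show ?thesis using assms by (simp add: mult.assoc)
qed

lemma W_single: "W Q1 Q j h [y] [a] = pmf (Q1 j) y * pmf (h (Suc 0) [] [y]) (a j)"
  by (simp add: W_def tf_def)

lemma hist_len: "(xs, as) \<in> set_pmf (hist Q1 Q g t) \<Longrightarrow> length xs = t \<and> length as = t"
  by (induction t arbitrary: xs as) (auto split: if_splits)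

lemma hist_pmf:
  fixes Q1 :: "'p::finite \<Rightarrow> 'x pmf"
  shows "pmf (hist Q1 Q g t) (xs, as) = (if length xs = t \<and> length as = t
     then \<Prod>j\<in>UNIV. W Q1 Q j (g j) (map (\<lambda>y. y j) xs) as else 0)"
proof (induction t arbitrary: xs as)
  case 0
  then show ?case by (auto simp: indicator_def)
next
  case (Suc t)
  show ?case
  proof (cases "length xs = Suc t \<and> length as = Suc t")
    case True
    then obtain xs' x as' a where xs: "xs = xs' @ [x]" and as: "as = as' @ [a]"
      by (metis length_Suc_conv_rev)
    have l: "length xs' = t" "length as' = t" using True xs as by auto
    have ne: "t \<noteq> 0 \<Longrightarrow> xs' \<noteq> []" using l by auto
    show ?thesis unfolding xs as hist_pmf_snoc Suc.IH
      using l ne by (cases "t = 0") (simp_all add: W_single W_snoc last_map prod.distrib mult_ac)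
  next
    case False
    then have "(xs, as) \<notin> set_pmf (hist Q1 Q g (Suc t))" using hist_len by blast
    then show ?thesis using False by (auto simp add: set_pmf_iff simp del: hist.simps)
  qed
qed




lemma sum_lists_Suc:
  assumes "finite S"
  shows "(\<Sum>ys\<in>{ys. set ys \<subseteq> S \<and> length ys = Suc t}. F ys)
       = (\<Sum>ys\<in>{ys. set ys \<subseteq> S \<and> length ys = t}. \<Sum>y\<in>S. F (ys @ [y]))"
proof -
  have img: "{ys. set ys \<subseteq> S \<and> length ys = Suc t} = (\<lambda>(ys,y). ys @ [y]) ` ({ys. set ys \<subseteq> S \<and> length ys = t} \<times> S)"
  proof (intro equalityI subsetI)
    fix zs assume "zs \<in> {ys. set ys \<subseteq> S \<and> length ys = Suc t}"
    then obtain ys y where "zs = ys @ [y]" "set ys \<subseteq> S" "y \<in> S" "length ys = t"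
      by (auto simp: length_Suc_conv_rev)
    then show "zs \<in> (\<lambda>(ys,y). ys @ [y]) ` ({ys. set ys \<subseteq> S \<and> length ys = t} \<times> S)" by auto
  qed auto
  have inj: "inj_on (\<lambda>(ys,y). ys @ [y]) ({ys. set ys \<subseteq> S \<and> length ys = t} \<times> S)"
    by (auto simp: inj_on_def)
  show ?thesis unfolding img
    by (subst sum.reindex[OF inj]) (simp add: sum.cartesian_product case_prod_unfold)
qed

lemma sum_list_filter_map_distinct:
  "distinct lst \<Longrightarrow> sum_list (map snd (filter (\<lambda>z. fst z = b) (map (\<lambda>c. (c, F c)) lst)))
     = (if b \<in> set lst then F b else 0)"
  by (induction lst) auto

locale setting =
  fixes X :: "'p::finite \<Rightarrow> 'x set" and A :: "'p \<Rightarrow> 'a set"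
    and Q1 :: "'p \<Rightarrow> 'x pmf" and Q :: "'p \<Rightarrow> nat \<Rightarrow> 'x \<Rightarrow> ('p \<Rightarrow> 'a) \<Rightarrow> 'x pmf"
    and g :: "'p \<Rightarrow> ('p, 'x, 'a) strategy"
    and i :: 'p
  assumes finX: "\<And>j. finite (X j)" and neX: "\<And>j. X j \<noteq> {}"
    and finA: "\<And>j. finite (A j)" and neA: "\<And>j. A j \<noteq> {}"
    and Q1X: "\<And>j. set_pmf (Q1 j) \<subseteq> X j"
    and QX: "\<And>j t x a. x \<in> X j \<Longrightarrow> a \<in> Pi UNIV A \<Longrightarrow> set_pmf (Q j t x a) \<subseteq> X j"
    and g_valid: "\<And>j. valid_strategy (A j) (g j)"
begin

definition L :: "nat \<Rightarrow> 'x list set" where "L t = {ys. set ys \<subseteq> X i \<and> length ys = t}"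

lemma finL: "finite (L t)" unfolding L_def using finX by (rule finite_lists_length_eq)

lemma sum_L_Suc: "(\<Sum>ys\<in>L (Suc t). F ys) = (\<Sum>ys\<in>L t. \<Sum>y\<in>X i. F (ys @ [y]))"
  unfolding L_def using finX by (rule sum_lists_Suc)

definition tfn :: "nat \<Rightarrow> 'x list \<Rightarrow> ('p \<Rightarrow> 'a) list \<Rightarrow> 'x \<Rightarrow> real" where
  "tfn t ys as y = pmf (if t = 0 then Q1 i else Q i (Suc t) (last ys) (last as)) y"

definition Ng :: "nat \<Rightarrow> ('p \<Rightarrow> 'a) list \<Rightarrow> 'x \<Rightarrow> 'a \<Rightarrow> real" where
  "Ng t as y b = (\<Sum>ys\<in>L t. W Q1 Q i (g i) ys as * tfn t ys as y * pmf (g i (Suc t) as (ys @ [y])) b)"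

definition Dg :: "nat \<Rightarrow> ('p \<Rightarrow> 'a) list \<Rightarrow> 'x \<Rightarrow> real" where
  "Dg t as y = (\<Sum>ys\<in>L t. W Q1 Q i (g i) ys as * tfn t ys as y)"

definition lst :: "'a list" where "lst = (SOME l. set l = A i \<and> distinct l)"

lemma lst: "set lst = A i" "distinct lst"
  using someI_ex[OF finite_distinct_list[OF finA[of i]]] unfolding lst_def by auto

definition a0 :: 'a where "a0 = (SOME a. a \<in> A i)"

lemma a0: "a0 \<in> A i" unfolding a0_def using neA[of i] by (auto intro: someI_ex)

definition m :: "nat \<Rightarrow> ('p \<Rightarrow> 'a) list \<Rightarrow> 'x \<Rightarrow> 'a pmf" where
  "m t as y = (case t of 0 \<Rightarrow> return_pmf a0 | Suc t' \<Rightarrow>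
      (if Dg t' as y = 0 then return_pmf a0
       else pmf_of_list (map (\<lambda>b. (b, Ng t' as y b / Dg t' as y)) lst)))"

lemma W_nonneg: "0 \<le> W Q1 Q j h ys as"
  unfolding W_def tf_def by (intro prod_nonneg) auto

lemma gi_pmf_out: "b \<notin> A i \<Longrightarrow> pmf (g i t as xs) b = 0"
  using g_valid[of i] unfolding valid_strategy_def by (metis set_pmf_iff subsetD)

lemma sum_Ng: "(\<Sum>b\<in>A i. Ng t as y b) = Dg t as y"
proof -
  have "(\<Sum>b\<in>A i. Ng t as y b) = (\<Sum>ys\<in>L t. W Q1 Q i (g i) ys as * tfn t ys as y * (\<Sum>b\<in>A i. pmf (g i (Suc t) as (ys @ [y])) b))"
    unfolding Ng_def by (subst sum.swap) (simp add: sum_distrib_left)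
  also have "\<dots> = Dg t as y"
    unfolding Dg_def using g_valid[of i] finA[of i]
    by (intro sum.cong refl) (simp add: sum_pmf_eq_1 valid_strategy_def)
  finally show ?thesis .
qed

lemma Ng_nonneg: "0 \<le> Ng t as y b"
  unfolding Ng_def tfn_def by (intro sum_nonneg mult_nonneg_nonneg W_nonneg) auto

lemma Ng_le: "Ng t as y b \<le> Dg t as y"
  unfolding Ng_def Dg_def tfn_def
  by (intro sum_mono mult_left_le mult_nonneg_nonneg W_nonneg) (auto simp: pmf_le_1)

lemma m_valid: "set_pmf (m t as y) \<subseteq> A i"
proof (cases t)
  case 0 then show ?thesis using a0 by (simp add: m_def)
next
  case (Suc t')
  show ?thesis
  proof (cases "Dg t' as y = 0")
    case True then show ?thesis using a0 Suc by (simp add: m_def)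
  next
    case False
    have D: "Dg t' as y > 0" using False Ng_le[of t' as y a0] Ng_nonneg[of t' as y a0] by linarith
    have wf: "pmf_of_list_wf (map (\<lambda>b. (b, Ng t' as y b / Dg t' as y)) lst)"
    proof (rule pmf_of_list_wfI)
      show "sum_list (map snd (map (\<lambda>b. (b, Ng t' as y b / Dg t' as y)) lst)) = 1"
        using lst D by (simp add: o_def sum_list_distinct_conv_sum_set sum_divide_distrib[symmetric] sum_Ng)
    qed (use D Ng_nonneg in auto)
    show ?thesis using False Suc set_pmf_of_list[OF wf] lst by (auto simp: m_def)
  qed
qed

lemma key_m: "Dg t as y * pmf (m (Suc t) as y) b = Ng t as y b"
proof (cases "Dg t as y = 0")
  case True
  then show ?thesis using Ng_le[of t as y b] Ng_nonneg[of t as y b] by simp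
next
  case False
  have D: "Dg t as y > 0" using False Ng_le[of t as y a0] Ng_nonneg[of t as y a0] by linarith
  have wf: "pmf_of_list_wf (map (\<lambda>b. (b, Ng t as y b / Dg t as y)) lst)"
  proof (rule pmf_of_list_wfI)
    show "sum_list (map snd (map (\<lambda>b. (b, Ng t as y b / Dg t as y)) lst)) = 1"
      using lst D by (simp add: o_def sum_list_distinct_conv_sum_set sum_divide_distrib[symmetric] sum_Ng)
  qed (use D Ng_nonneg in auto)
  have "pmf (m (Suc t) as y) b = (if b \<in> A i then Ng t as y b / Dg t as y else 0)"
    using False by (simp add: m_def pmf_pmf_of_list[OF wf] sum_list_filter_map_distinct lst)
  moreover have "b \<notin> A i \<Longrightarrow> Ng t as y b = 0"
    unfolding Ng_def by (simp add: gi_pmf_out)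
  ultimately show ?thesis using False by auto
qed

end



context setting begin

definition hm :: "('p, 'x, 'a) strategy" where "hm = (\<lambda>t as xs. m t as (last xs))"

lemma claim:
  "length as = t \<Longrightarrow> (\<Sum>ys\<in>L t. W Q1 Q i hm ys as * f (last ys)) = (\<Sum>ys\<in>L t. W Q1 Q i (g i) ys as * f (last ys))"
proof (induction t arbitrary: as f)
  case 0
  have "L 0 = {[]}" by (auto simp: L_def)
  then show ?case by simp
next
  case (Suc t)
  then obtain as' a where as: "as = as' @ [a]" and l: "length as' = t" by (metis length_Suc_conv_rev)
  have lys: "ys \<in> L t \<Longrightarrow> length ys = length as'" for ys using l by (simp add: L_def)
  have "(\<Sum>ys\<in>L (Suc t). W Q1 Q i hm ys as * f (last ys))
      = (\<Sum>ys\<in>L t. \<Sum>y\<in>X i. W Q1 Q i hm ys as' * tfn t ys as' y * pmf (m (Suc t) as' y) (a i) * f y)"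
    unfolding sum_L_Suc as using lys l
    by (intro sum.cong refl) (simp add: W_snoc tfn_def hm_def)
  also have "\<dots> = (\<Sum>y\<in>X i. (\<Sum>ys\<in>L t. W Q1 Q i hm ys as' * tfn t ys as' y) * pmf (m (Suc t) as' y) (a i) * f y)"
    by (subst sum.swap) (simp add: sum_distrib_right)
  also have "\<dots> = (\<Sum>y\<in>X i. Dg t as' y * pmf (m (Suc t) as' y) (a i) * f y)"
  proof (intro sum.cong refl)
    fix y
    have "(\<Sum>ys\<in>L t. W Q1 Q i hm ys as' * tfn t ys as' y) = Dg t as' y"
      unfolding tfn_def Dg_def
      using Suc.IH[OF l, of "\<lambda>z. pmf (if t = 0 then Q1 i else Q i (Suc t) z (last as')) y"] by simp
    then show "(\<Sum>ys\<in>L t. W Q1 Q i hm ys as' * tfn t ys as' y) * pmf (m (Suc t) as' y) (a i) * f y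
       = Dg t as' y * pmf (m (Suc t) as' y) (a i) * f y" by simp
  qed
  also have "\<dots> = (\<Sum>y\<in>X i. Ng t as' y (a i) * f y)" by (simp add: key_m)
  also have "\<dots> = (\<Sum>ys\<in>L t. \<Sum>y\<in>X i. W Q1 Q i (g i) ys as' * tfn t ys as' y * pmf (g i (Suc t) as' (ys @ [y])) (a i) * f y)"
    unfolding Ng_def by (subst sum.swap) (simp add: sum_distrib_right)
  also have "\<dots> = (\<Sum>ys\<in>L (Suc t). W Q1 Q i (g i) ys as * f (last ys))"
    unfolding sum_L_Suc as using lys l
    by (intro sum.cong refl) (simp add: W_snoc tfn_def)
  finally show ?case .
qed

end



definition merge :: "'p \<Rightarrow> ('p \<Rightarrow> 'x) list \<Rightarrow> 'x list \<Rightarrow> ('p \<Rightarrow> 'x) list" where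
  "merge i xo ys = map (\<lambda>(y,z). y(i := z)) (zip xo ys)"

lemma col_merge:
  "length xo = length ys \<Longrightarrow> map (\<lambda>y. y j) (merge i xo ys) = (if j = i then ys else map (\<lambda>y. y j) xo)"
  by (auto simp: merge_def intro!: nth_equalityI)

lemma last_merge:
  assumes "length xo = length ys" "ys \<noteq> []"
  shows "last (merge i xo ys) = (last xo)(i := last ys)"
proof -
  have "merge i xo ys \<noteq> []" using assms by (auto simp: merge_def)
  then show ?thesis using assms by (simp add: last_conv_nth merge_def)
qed

context setting begin

definition XP :: "('p \<Rightarrow> 'x) set" where "XP = {y. \<forall>j. y j \<in> X j}"
definition AP :: "('p \<Rightarrow> 'a) set" where "AP = {y. \<forall>j. y j \<in> A j}"

lemma finXP: "finite XP"
proof -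
  have "XP = PiE UNIV X" by (auto simp: XP_def PiE_def extensional_def)
  then show ?thesis using finX by (simp add: finite_PiE)
qed

lemma finAP: "finite AP"
proof -
  have "AP = PiE UNIV A" by (auto simp: AP_def PiE_def extensional_def)
  then show ?thesis using finA by (simp add: finite_PiE)
qed

definition XL :: "nat \<Rightarrow> ('p \<Rightarrow> 'x) list set" where "XL t = {xs. set xs \<subseteq> XP \<and> length xs = t}"
definition AL :: "nat \<Rightarrow> ('p \<Rightarrow> 'a) list set" where "AL t = {as. set as \<subseteq> AP \<and> length as = t}"
definition XOL :: "nat \<Rightarrow> ('p \<Rightarrow> 'x) list set" where
  "XOL t = {xo. set xo \<subseteq> (\<lambda>y. y(i := undefined)) ` XP \<and> length xo = t}"

lemma finXL: "finite (XL t)" unfolding XL_def using finXP by (rule finite_lists_length_eq)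
lemma finAL: "finite (AL t)" unfolding AL_def using finAP by (rule finite_lists_length_eq)

lemma hist_supp:
  assumes hv: "\<And>j t as xs. set_pmf (h j t as xs) \<subseteq> A j"
  shows "(xs, as) \<in> set_pmf (hist Q1 Q h t) \<Longrightarrow> xs \<in> XL t \<and> as \<in> AL t"
proof (induction t arbitrary: xs as)
  case 0 then show ?case by (simp add: XL_def AL_def)
next
  case (Suc t)
  from Suc.prems obtain xs' as' x a where p: "(xs', as') \<in> set_pmf (hist Q1 Q h t)"
    and xs: "xs = xs' @ [x]" and as: "as = as' @ [a]"
    and x: "x \<in> set_pmf (if t = 0 then Pi_pmf UNIV undefined Q1
                 else Pi_pmf UNIV undefined (\<lambda>i. Q i (Suc t) (last xs' i) (last as')))"
    and a: "a \<in> set_pmf (Pi_pmf UNIV undefined (\<lambda>i. h i (Suc t) as' (map (\<lambda>y. y i) (xs' @ [x]))))"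
    by (auto split: prod.splits)
  have IH: "xs' \<in> XL t" "as' \<in> AL t" using Suc.IH[OF p] by auto
  have "a \<in> AP" using a by (simp add: set_Pi_pmf PiE_dflt_def AP_def) (meson hv subsetD)
  moreover have "x \<in> XP"
  proof (cases "t = 0")
    case True then show ?thesis using x Q1X by (auto simp: set_Pi_pmf PiE_dflt_def XP_def)
  next
    case False
    then have "xs' \<noteq> []" "as' \<noteq> []" using IH by (auto simp: XL_def AL_def)
    then have "last xs' \<in> XP" "last as' \<in> AP" using IH by (auto simp: XL_def AL_def)
    then show ?thesis using x False QX by (fastforce simp: set_Pi_pmf PiE_dflt_def XP_def AP_def)
  qed
  ultimately show ?case using IH xs as by (auto simp: XL_def AL_def)
qed

lemma merge_bij: "bij_betw (\<lambda>(xo, ys). merge i xo ys) (XOL t \<times> L t) (XL t)"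
proof (rule bij_betw_byWitness[where f' = "\<lambda>xs. (map (\<lambda>y. y(i := undefined)) xs, map (\<lambda>y. y i) xs)"])
  show "\<forall>a\<in>XOL t \<times> L t. (map (\<lambda>y. y(i := undefined)) (case a of (xo, ys) \<Rightarrow> merge i xo ys),
          map (\<lambda>y. y i) (case a of (xo, ys) \<Rightarrow> merge i xo ys)) = a"
  proof
    fix p assume "p \<in> XOL t \<times> L t"
    then obtain xo ys where p: "p = (xo, ys)" and xo: "xo \<in> XOL t" and ys: "ys \<in> L t" by auto
    have l: "length xo = length ys" using xo ys by (simp add: XOL_def L_def)
    have "\<forall>y\<in>set xo. y(i := undefined) = y" using xo by (auto simp: XOL_def)
    then have e: "k < length xo \<Longrightarrow> (xo!k)(i := undefined) = xo!k" for k using nth_mem by blast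
    have "map (\<lambda>y. y(i := undefined)) (merge i xo ys) = xo"
      using l by (intro nth_equalityI) (simp_all add: merge_def e)
    then show "(map (\<lambda>y. y(i := undefined)) (case p of (xo, ys) \<Rightarrow> merge i xo ys),
          map (\<lambda>y. y i) (case p of (xo, ys) \<Rightarrow> merge i xo ys)) = p"
      using col_merge[OF l, of i] p by simp
  qed
  show "\<forall>a'\<in>XL t. (case (map (\<lambda>y. y(i := undefined)) a', map (\<lambda>y. y i) a') of (xo, ys) \<Rightarrow> merge i xo ys) = a'"
    by (auto simp: merge_def intro!: nth_equalityI)
  show "(\<lambda>(xo, ys). merge i xo ys) ` (XOL t \<times> L t) \<subseteq> XL t"
  proof clarify
    fix xo ys assume xo: "xo \<in> XOL t" and ys: "ys \<in> L t"
    have l: "length xo = length ys" using xo ys by (simp add: XOL_def L_def)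
    have "set (merge i xo ys) \<subseteq> XP"
    proof
      fix z assume "z \<in> set (merge i xo ys)"
      then obtain k where k: "k < length xo" "z = (xo!k)(i := ys!k)" using l
        by (auto simp: merge_def in_set_conv_nth)
      then obtain y where "y \<in> XP" "xo!k = y(i := undefined)" using xo by (force simp: XOL_def)
      moreover have "ys!k \<in> X i" using ys k l by (auto simp: L_def)
      ultimately show "z \<in> XP" using k by (auto simp: XP_def)
    qed
    then show "merge i xo ys \<in> XL t" using l xo by (simp add: XL_def XOL_def merge_def)
  qed
  show "(\<lambda>xs. (map (\<lambda>y. y(i := undefined)) xs, map (\<lambda>y. y i) xs)) ` XL t \<subseteq> XOL t \<times> L t"
    by (auto simp: XL_def XOL_def L_def XP_def) blast+
qed

end



context setting begin

lemma marginal_sum: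
  assumes hv: "\<And>j t as xs. set_pmf (h j t as xs) \<subseteq> A j"
  shows "pmf (marginal Q1 Q h t) z = (\<Sum>as\<in>AL t. \<Sum>xs\<in>XL t. pmf (hist Q1 Q h t) (xs, as) * indicator {z} (last xs, last as))"
proof -
  have "pmf (marginal Q1 Q h t) z = (\<integral>p. indicator {z} (last (fst p), last (snd p)) \<partial>measure_pmf (hist Q1 Q h t))"
    by (simp add: marginal_def map_pmf_def pmf_bind split_beta)
  also have "\<dots> = (\<Sum>p\<in>XL t \<times> AL t. indicator {z} (last (fst p), last (snd p)) * pmf (hist Q1 Q h t) p)"
    using hist_supp[OF hv] finXL finAL by (intro integral_measure_pmf_real) auto
  also have "\<dots> = (\<Sum>xs\<in>XL t. \<Sum>as\<in>AL t. pmf (hist Q1 Q h t) (xs, as) * indicator {z} (last xs, last as))"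
    by (simp add: sum.cartesian_product mult.commute split_beta)
  also have "\<dots> = (\<Sum>as\<in>AL t. \<Sum>xs\<in>XL t. pmf (hist Q1 Q h t) (xs, as) * indicator {z} (last xs, last as))"
    by (rule sum.swap)
  finally show ?thesis .
qed

lemma inner:
  assumes hg: "\<And>j. j \<noteq> i \<Longrightarrow> h j = g j" and as: "as \<in> AL t" and t: "t \<noteq> 0"
  shows "(\<Sum>xs\<in>XL t. pmf (hist Q1 Q h t) (xs, as) * indicator {z} (last xs, last as))
    = (\<Sum>xo\<in>XOL t. \<Sum>ys\<in>L t. W Q1 Q i (h i) ys as * ((\<Prod>j\<in>UNIV-{i}. W Q1 Q j (g j) (map (\<lambda>y. y j) xo) as)
          * indicator {z} ((last xo)(i := last ys), last as)))"
proof -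
  have "(\<Sum>xs\<in>XL t. pmf (hist Q1 Q h t) (xs, as) * indicator {z} (last xs, last as))
      = (\<Sum>p\<in>XOL t \<times> L t. pmf (hist Q1 Q h t) ((\<lambda>(xo, ys). merge i xo ys) p, as) * indicator {z} (last ((\<lambda>(xo, ys). merge i xo ys) p), last as))"
    by (rule sum.reindex_bij_betw[OF merge_bij, symmetric])
  also have "\<dots> = (\<Sum>xo\<in>XOL t. \<Sum>ys\<in>L t. pmf (hist Q1 Q h t) (merge i xo ys, as) * indicator {z} (last (merge i xo ys), last as))"
    by (simp add: sum.cartesian_product split_beta)
  also have "\<dots> = (\<Sum>xo\<in>XOL t. \<Sum>ys\<in>L t. W Q1 Q i (h i) ys as * ((\<Prod>j\<in>UNIV-{i}. W Q1 Q j (g j) (map (\<lambda>y. y j) xo) as)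
          * indicator {z} ((last xo)(i := last ys), last as)))"
  proof (intro sum.cong refl)
    fix xo ys assume xo: "xo \<in> XOL t" and ys: "ys \<in> L t"
    have l: "length xo = length ys" "length ys = t" "length as = t" using xo ys as by (auto simp: XOL_def L_def AL_def)
    have ne: "ys \<noteq> []" using l t by auto
    have lm: "length (merge i xo ys) = t" using l by (simp add: merge_def)
    have "(\<Prod>j\<in>UNIV. W Q1 Q j (h j) (map (\<lambda>y. y j) (merge i xo ys)) as)
        = W Q1 Q i (h i) ys as * (\<Prod>j\<in>UNIV-{i}. W Q1 Q j (g j) (map (\<lambda>y. y j) xo) as)"
      by (subst prod.remove[of _ i]) (auto simp: col_merge[OF l(1)] hg intro!: prod.cong)
    then show "pmf (hist Q1 Q h t) (merge i xo ys, as) * indicator {z} (last (merge i xo ys), last as)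
      = W Q1 Q i (h i) ys as * ((\<Prod>j\<in>UNIV-{i}. W Q1 Q j (g j) (map (\<lambda>y. y j) xo) as)
          * indicator {z} ((last xo)(i := last ys), last as))"
      using lm l by (simp add: hist_pmf last_merge[OF l(1) ne] mult.assoc)
  qed
  finally show ?thesis .
qed

definition gs where "gs = g(i := hm)"

lemma gs_g: "j \<noteq> i \<Longrightarrow> gs j = g j" by (simp add: gs_def)

lemma gs_valid: "set_pmf (gs j t as xs) \<subseteq> A j"
  using g_valid[of j] m_valid by (auto simp: gs_def hm_def valid_strategy_def)

lemma g_valid': "set_pmf (g j t as xs) \<subseteq> A j"
  using g_valid[of j] by (auto simp: valid_strategy_def)

lemma marginal_eq: "t \<noteq> 0 \<Longrightarrow> marginal Q1 Q gs t = marginal Q1 Q g t"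
proof (rule pmf_eqI)
  fix z assume t: "t \<noteq> 0"
  show "pmf (marginal Q1 Q gs t) z = pmf (marginal Q1 Q g t) z"
    unfolding marginal_sum[OF gs_valid] marginal_sum[OF g_valid']
  proof (rule sum.cong[OF refl])
    fix as assume as: "as \<in> AL t"
    have l: "length as = t" using as by (simp add: AL_def)
    show "(\<Sum>xs\<in>XL t. pmf (hist Q1 Q gs t) (xs, as) * indicator {z} (last xs, last as)) =
          (\<Sum>xs\<in>XL t. pmf (hist Q1 Q g t) (xs, as) * indicator {z} (last xs, last as))"
      apply (subst inner[of gs, OF gs_g as t], assumption)
      apply (subst inner[of g, OF _ as t], simp)
      apply (rule sum.cong[OF refl])
      subgoal for xo
        using claim[OF l, of "\<lambda>y. (\<Prod>j\<in>UNIV-{i}. W Q1 Q j (g j) (map (\<lambda>y. y j) xo) as)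
          * indicator {z} ((last xo)(i := y), last as)"] by (simp add: gs_def)
      done
  qed
qed

end



lemma hist_prefix:
  "map_pmf (\<lambda>(xs, as). (take n xs, take n as)) (hist Q1 Q h (n + d)) = hist Q1 Q h n"
proof (induction d)
  case 0
  have "map_pmf (\<lambda>(xs, as). (take n xs, take n as)) (hist Q1 Q h n) = map_pmf id (hist Q1 Q h n)"
    by (intro map_pmf_cong refl) (auto dest: hist_len)
  then show ?case by simp
next
  case (Suc d)
  have "map_pmf (\<lambda>(xs, as). (take n xs, take n as)) (hist Q1 Q h (Suc (n + d)))
     = bind_pmf (hist Q1 Q h (n + d)) (\<lambda>p. return_pmf ((\<lambda>(xs, as). (take n xs, take n as)) p))"
    unfolding hist.simps map_bind_pmf
  proof (intro bind_pmf_cong refl)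
    fix p assume p: "p \<in> set_pmf (hist Q1 Q h (n + d))"
    obtain xs as where pe: "p = (xs, as)" by fastforce
    have l: "length xs = n + d" "length as = n + d" using p pe hist_len by blast+
    show "map_pmf (\<lambda>(xs, as). (take n xs, take n as)) (case p of (xs, as) \<Rightarrow>
        (if n + d = 0 then Pi_pmf UNIV undefined Q1
         else Pi_pmf UNIV undefined (\<lambda>i. Q i (Suc (n + d)) (last xs i) (last as))) \<bind>
        (\<lambda>x. Pi_pmf UNIV undefined (\<lambda>i. h i (Suc (n + d)) as (map (\<lambda>y. y i) (xs @ [x]))) \<bind>
              (\<lambda>a. return_pmf (xs @ [x], as @ [a]))))
      = return_pmf ((\<lambda>(xs, as). (take n xs, take n as)) p)"
      using l by (simp add: pe map_bind_pmf)
  qed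
  also have "\<dots> = map_pmf (\<lambda>(xs, as). (take n xs, take n as)) (hist Q1 Q h (n + d))"
    by (simp add: map_pmf_def)
  finally show ?case using Suc.IH by simp
qed

context setting begin

lemma nth_law:
  assumes "t < T"
  shows "map_pmf (\<lambda>(xs, as). (xs ! t, as ! t)) (hist Q1 Q h T) = marginal Q1 Q h (Suc t)"
proof -
  have "map_pmf (\<lambda>(xs, as). (xs ! t, as ! t)) (hist Q1 Q h T)
      = map_pmf (\<lambda>(xs, as). (last xs, last as)) (map_pmf (\<lambda>(xs, as). (take (Suc t) xs, take (Suc t) as)) (hist Q1 Q h (Suc t + (T - Suc t))))"
    unfolding map_pmf_comp using assms
    by (intro map_pmf_cong) (auto dest!: hist_len simp: take_Suc_conv_app_nth)
  then show ?thesis using hist_prefix[where n="Suc t" and d="T - Suc t" and h=h] by (simp add: marginal_def del: hist.simps)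
qed

lemma J_sum:
  assumes hv: "\<And>j t as xs. set_pmf (h j t as xs) \<subseteq> A j"
  shows "J Q1 Q h T Rj = (\<Sum>t<T. measure_pmf.expectation (marginal Q1 Q h (Suc t)) (\<lambda>(x, a). Rj x a))"
proof -
  have fin: "finite (set_pmf (hist Q1 Q h T))"
    by (rule finite_subset[of _ "XL T \<times> AL T"]) (use hist_supp[OF hv] finXL finAL in auto)
  have "J Q1 Q h T Rj = (\<Sum>t<T. measure_pmf.expectation (hist Q1 Q h T) (\<lambda>(xs, as). Rj (xs ! t) (as ! t)))"
    unfolding J_def split_beta
    using fin by (simp add: integrable_measure_pmf_finite)
  also have "\<dots> = (\<Sum>t<T. measure_pmf.expectation (marginal Q1 Q h (Suc t)) (\<lambda>(x, a). Rj x a))"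
  proof (intro sum.cong refl)
    fix t assume "t \<in> {..<T}"
    then have "marginal Q1 Q h (Suc t) = map_pmf (\<lambda>(xs, as). (xs ! t, as ! t)) (hist Q1 Q h T)"
      by (simp add: nth_law)
    then show "measure_pmf.expectation (hist Q1 Q h T) (\<lambda>(xs, as). Rj (xs ! t) (as ! t))
       = measure_pmf.expectation (marginal Q1 Q h (Suc t)) (\<lambda>(x, a). Rj x a)"
      by (simp add: case_prod_unfold)
  qed
  finally show ?thesis .
qed

lemma J_eq: "J Q1 Q gs T Rj = J Q1 Q g T Rj"
  unfolding J_sum[OF gs_valid] J_sum[OF g_valid'] using marginal_eq by simp

end

theorem fact1:
  fixes X :: "'p::finite \<Rightarrow> 'x set" and A :: "'p \<Rightarrow> 'a set"
    and Q1 :: "'p \<Rightarrow> 'x pmf" and Q :: "'p \<Rightarrow> nat \<Rightarrow> 'x \<Rightarrow> ('p \<Rightarrow> 'a) \<Rightarrow> 'x pmf"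
    and R :: "'p \<Rightarrow> ('p \<Rightarrow> 'x) \<Rightarrow> ('p \<Rightarrow> 'a) \<Rightarrow> real"
    and g :: "'p \<Rightarrow> ('p, 'x, 'a) strategy"
    and i :: 'p and T :: nat
  assumes finX: "\<And>j. finite (X j)" and neX: "\<And>j. X j \<noteq> {}"
    and finA: "\<And>j. finite (A j)" and neA: "\<And>j. A j \<noteq> {}"
    and Q1X: "\<And>j. set_pmf (Q1 j) \<subseteq> X j"
    and QX: "\<And>j t x a. x \<in> X j \<Longrightarrow> a \<in> Pi UNIV A \<Longrightarrow> set_pmf (Q j t x a) \<subseteq> X j"
    and g_valid: "\<And>j. valid_strategy (A j) (g j)"
  shows "\<exists>m :: nat \<Rightarrow> ('p \<Rightarrow> 'a) list \<Rightarrow> 'x \<Rightarrow> 'a pmf.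
           (\<forall>t as x. set_pmf (m t as x) \<subseteq> A i) \<and>
           (\<forall>t\<in>{1..T}. marginal Q1 Q (g(i := (\<lambda>t as xs. m t as (last xs)))) t
                          = marginal Q1 Q g t) \<and>
           (\<forall>j. J Q1 Q (g(i := (\<lambda>t as xs. m t as (last xs)))) T (R j) = J Q1 Q g T (R j))"
proof -
  interpret setting X A Q1 Q g i using assms by unfold_locales
  show ?thesis
    apply (rule exI[of _ m])
    using m_valid marginal_eq J_eq unfolding gs_def hm_def by auto
qed

end
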